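(* Let $p:X_2\to X_1$, $q:Y_2\to Y_1$, $s:W_2\to W_1$, $f:X_1\to Y_1$, $g:Y_1\to W_1$, $h:X_2\to Y_2$, $k:Y_2\to W_2$ be equivariant maps with $f\circ p=q\circ h$ and $g\circ q=s\circ k$, such that both squares (square (1): $p,f,h,q$; square (2): $q,g,k,s$) are safe squares, the pair $(f,g)$ is forward-safe and the pair $(h,k)$ is backward-safe. Then the outer square ($p$, $g\circ f$, $k\circ h$, $s$) is a safe square.
   Context: Nominal sets over a countably infinite set $\mathcal V$ of names. For an equivariant $f:X\to Y$: $u$ is $f$-safe if $|\mathsf{supp}(u)|=\max\{|\mathsf{supp}(v)|:v\in f^{-1}(f(u))\}$ (maximum existing); $\mathsf{bv}_f(u)=\mathsf{supp}(u)\setminus\mathsf{supp}(f(u))$; $f$ is safe if every element of $Y$ has an $f$-safe preimage. A commuting square $a:Z\to X$, $f:X\to W$, $b:Z\to Y$, $c:Y\to W$ ($f\circ a=c\circ b$) is a safe square if for every $f$-safe $u\in X$ and $v\in Y$ with $f(u)=c(v)$ and $\mathsf{bv}_f(u)\cap\mathsf{supp}(v)=\emptyset$ there is a $b$-safe $z\in Z$ with $a(z)=u$, $b(z)=v$. For safe maps $f:X\to Y$, $g:Y\to W$: the pair $(f,g)$ is forward-safe if for every $(g\circ f)$-safe $u$, $f(u)$ is $g$-safe; it is backward-safe if every $f$-safe $u$ with $f(u)$ $g$-safe is $(g\circ f)$-safe. *)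

theory Defs
  imports Main
begin

text \<open>Names: the countably infinite set of natural numbers.\<close>

definition fperm :: "(nat \<Rightarrow> nat) \<Rightarrow> bool" where
  "fperm \<pi> \<longleftrightarrow> bij \<pi> \<and> finite {a. \<pi> a \<noteq> a}"

definition supports :: "((nat \<Rightarrow> nat) \<Rightarrow> 'a \<Rightarrow> 'a) \<Rightarrow> nat set \<Rightarrow> 'a \<Rightarrow> bool" where
  "supports act A x \<longleftrightarrow> (\<forall>\<pi>. fperm \<pi> \<and> (\<forall>a\<in>A. \<pi> a = a) \<longrightarrow> act \<pi> x = x)"

definition nominal_set :: "((nat \<Rightarrow> nat) \<Rightarrow> 'a \<Rightarrow> 'a) \<Rightarrow> bool" where
  "nominal_set act \<longleftrightarrow>
     (\<forall>x. act id x = x) \<and>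
     (\<forall>\<pi> \<sigma> x. fperm \<pi> \<and> fperm \<sigma> \<longrightarrow> act (\<pi> \<circ> \<sigma>) x = act \<pi> (act \<sigma> x)) \<and>
     (\<forall>x. \<exists>A. finite A \<and> supports act A x)"

definition supp :: "((nat \<Rightarrow> nat) \<Rightarrow> 'a \<Rightarrow> 'a) \<Rightarrow> 'a \<Rightarrow> nat set" where
  "supp act x = \<Inter>{A. finite A \<and> supports act A x}"

definition equivariant ::
  "((nat \<Rightarrow> nat) \<Rightarrow> 'a \<Rightarrow> 'a) \<Rightarrow> ((nat \<Rightarrow> nat) \<Rightarrow> 'b \<Rightarrow> 'b) \<Rightarrow> ('a \<Rightarrow> 'b) \<Rightarrow> bool" where
  "equivariant actX actY f \<longleftrightarrow> (\<forall>\<pi> x. fperm \<pi> \<longrightarrow> f (actX \<pi> x) = actY \<pi> (f x))"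

definition safe_elem :: "((nat \<Rightarrow> nat) \<Rightarrow> 'a \<Rightarrow> 'a) \<Rightarrow> ('a \<Rightarrow> 'b) \<Rightarrow> 'a \<Rightarrow> bool" where
  "safe_elem actX f u \<longleftrightarrow> (\<forall>v. f v = f u \<longrightarrow> card (supp actX v) \<le> card (supp actX u))"

definition bv ::
  "((nat \<Rightarrow> nat) \<Rightarrow> 'a \<Rightarrow> 'a) \<Rightarrow> ((nat \<Rightarrow> nat) \<Rightarrow> 'b \<Rightarrow> 'b) \<Rightarrow> ('a \<Rightarrow> 'b) \<Rightarrow> 'a \<Rightarrow> nat set" where
  "bv actX actY f u = supp actX u - supp actY (f u)"

definition safe_map :: "((nat \<Rightarrow> nat) \<Rightarrow> 'a \<Rightarrow> 'a) \<Rightarrow> ('a \<Rightarrow> 'b) \<Rightarrow> bool" where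
  "safe_map actX f \<longleftrightarrow> (\<forall>y. \<exists>u. f u = y \<and> safe_elem actX f u)"

definition safe_square ::
  "((nat \<Rightarrow> nat) \<Rightarrow> 'z \<Rightarrow> 'z) \<Rightarrow> ((nat \<Rightarrow> nat) \<Rightarrow> 'x \<Rightarrow> 'x) \<Rightarrow>
   ((nat \<Rightarrow> nat) \<Rightarrow> 'y \<Rightarrow> 'y) \<Rightarrow> ((nat \<Rightarrow> nat) \<Rightarrow> 'w \<Rightarrow> 'w) \<Rightarrow>
   ('z \<Rightarrow> 'x) \<Rightarrow> ('x \<Rightarrow> 'w) \<Rightarrow> ('z \<Rightarrow> 'y) \<Rightarrow> ('y \<Rightarrow> 'w) \<Rightarrow> bool" where
  "safe_square actZ actX actY actW a f b c \<longleftrightarrow>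
     (\<forall>u v. safe_elem actX f u \<and> f u = c v \<and> bv actX actW f u \<inter> supp actY v = {} \<longrightarrow>
        (\<exists>z. safe_elem actZ b z \<and> a z = u \<and> b z = v))"

text \<open>Forward/backward safety of a pair of safe maps f : X -> Y, g : Y -> W
  (the notion is only defined for safe maps, so safety of f and g is part of it).\<close>
definition forward_safe ::
  "((nat \<Rightarrow> nat) \<Rightarrow> 'x \<Rightarrow> 'x) \<Rightarrow> ((nat \<Rightarrow> nat) \<Rightarrow> 'y \<Rightarrow> 'y) \<Rightarrow> ('x \<Rightarrow> 'y) \<Rightarrow> ('y \<Rightarrow> 'w) \<Rightarrow> bool" where
  "forward_safe actX actY f g \<longleftrightarrow> safe_map actX f \<and> safe_map actY g \<and>
     (\<forall>u. safe_elem actX (g \<circ> f) u \<longrightarrow> safe_elem actY g (f u))"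

definition backward_safe ::
  "((nat \<Rightarrow> nat) \<Rightarrow> 'x \<Rightarrow> 'x) \<Rightarrow> ((nat \<Rightarrow> nat) \<Rightarrow> 'y \<Rightarrow> 'y) \<Rightarrow> ('x \<Rightarrow> 'y) \<Rightarrow> ('y \<Rightarrow> 'w) \<Rightarrow> bool" where
  "backward_safe actX actY f g \<longleftrightarrow> safe_map actX f \<and> safe_map actY g \<and>
     (\<forall>u. safe_elem actX f u \<and> safe_elem actY g (f u) \<longrightarrow> safe_elem actX (g \<circ> f) u)"

end

theory Submission
  imports Defs
begin

definition sw :: "nat \<Rightarrow> nat \<Rightarrow> nat \<Rightarrow> nat" where
  "sw b c = (\<lambda>x. if x = b then c else if x = c then b else x)"

lemma sw_sw_app[simp]: "sw b c (sw b c x) = x"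
  by (simp add: sw_def)

lemma sw_sw: "sw b c \<circ> sw b c = id"
  by (rule ext) simp

lemma sw_inj: "inj (sw b c)"
proof (rule injI)
  fix x y assume "sw b c x = sw b c y"
  hence "sw b c (sw b c x) = sw b c (sw b c y)" by simp
  thus "x = y" by simp
qed

lemma fperm_sw: "fperm (sw b c)"
proof -
  have "bij (sw b c)" by (rule o_bij[OF sw_sw sw_sw])
  moreover have "{a. sw b c a \<noteq> a} \<subseteq> {b, c}" by (auto simp: sw_def)
  hence "finite {a. sw b c a \<noteq> a}" by (rule finite_subset) simp
  ultimately show ?thesis by (simp add: fperm_def)
qed

lemma fperm_comp: "fperm \<pi> \<Longrightarrow> fperm \<sigma> \<Longrightarrow> fperm (\<pi> \<circ> \<sigma>)"
proof -
  assume a: "fperm \<pi>" "fperm \<sigma>"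
  have "{a. (\<pi> \<circ> \<sigma>) a \<noteq> a} \<subseteq> {a. \<pi> a \<noteq> a} \<union> {a. \<sigma> a \<noteq> a}" by auto
  moreover have "finite ({a. \<pi> a \<noteq> a} \<union> {a. \<sigma> a \<noteq> a})"
    using a unfolding fperm_def by simp
  ultimately have "finite {a. (\<pi> \<circ> \<sigma>) a \<noteq> a}" by (rule finite_subset)
  moreover have "bij (\<pi> \<circ> \<sigma>)" using a unfolding fperm_def by (simp add: bij_comp)
  ultimately show ?thesis unfolding fperm_def by blast
qed

lemma supp_equiv:
  assumes "equivariant aX aY F"
  shows "supp aY (F x) \<subseteq> supp aX x"
  unfolding supp_def
proof (rule Inter_anti_mono, safe)
  fix A assume "finite A" "supports aX A x"
  show "supports aY A (F x)" unfolding supports_def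
  proof (intro allI impI)
    fix \<pi> assume H: "fperm \<pi> \<and> (\<forall>a\<in>A. \<pi> a = a)"
    hence "aX \<pi> x = x" using \<open>supports aX A x\<close> unfolding supports_def by blast
    moreover have "F (aX \<pi> x) = aY \<pi> (F x)" using assms H unfolding equivariant_def by blast
    ultimately show "aY \<pi> (F x) = F x" by simp
  qed
qed

lemma supp_finite:
  assumes "nominal_set act" shows "finite (supp act x)"
proof -
  obtain A where "finite A" "supports act A x" using assms unfolding nominal_set_def by blast
  hence "supp act x \<subseteq> A" unfolding supp_def by blast
  thus ?thesis using \<open>finite A\<close> finite_subset by blast
qed

lemma not_in_supp:
  assumes "a \<notin> supp act x" shows "\<exists>A. finite A \<and> supports act A x \<and> a \<notin> A"
  using assms unfolding supp_def by blast

lemma sw_fix: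
  assumes "supports act A x" "b \<notin> A" "c \<notin> A"
  shows "act (sw b c) x = x"
proof -
  have "\<forall>a\<in>A. sw b c a = a" using assms(2,3) by (auto simp: sw_def)
  thus ?thesis using assms(1) fperm_sw unfolding supports_def by blast
qed

lemma supports_sw:
  assumes N: "nominal_set act" and S: "supports act A y"
  shows "supports act (sw b c ` A) (act (sw b c) y)"
  unfolding supports_def
proof (intro allI impI)
  fix \<tau> assume H: "fperm \<tau> \<and> (\<forall>a\<in>sw b c ` A. \<tau> a = a)"
  let ?s = "sw b c"
  have Ht: "fperm \<tau>" using H by blast
  have fp: "fperm (?s \<circ> \<tau> \<circ> ?s)" using fperm_comp[OF fperm_comp[OF fperm_sw Ht] fperm_sw] .
  have "\<forall>a\<in>A. (?s \<circ> \<tau> \<circ> ?s) a = a"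
  proof
    fix a assume "a \<in> A"
    hence "\<tau> (?s a) = ?s a" using H by blast
    moreover have "?s (?s a) = a" by (simp add: sw_def)
    ultimately show "(?s \<circ> \<tau> \<circ> ?s) a = a" by simp
  qed
  hence fix1: "act (?s \<circ> \<tau> \<circ> ?s) y = y" using S fp unfolding supports_def by blast
  have comp: "\<And>\<pi> \<sigma> x. fperm \<pi> \<Longrightarrow> fperm \<sigma> \<Longrightarrow> act (\<pi> \<circ> \<sigma>) x = act \<pi> (act \<sigma> x)"
    using N unfolding nominal_set_def by blast
  have eq: "?s \<circ> (?s \<circ> \<tau> \<circ> ?s) = \<tau> \<circ> ?s"
    by (rule ext) (simp add: sw_def)
  have "act \<tau> (act ?s y) = act (\<tau> \<circ> ?s) y" by (rule comp[OF Ht fperm_sw, symmetric])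
  also have "\<dots> = act (?s \<circ> (?s \<circ> \<tau> \<circ> ?s)) y" using eq by simp
  also have "\<dots> = act ?s (act (?s \<circ> \<tau> \<circ> ?s) y)" using comp[OF fperm_sw fp] .
  also have "\<dots> = act ?s y" using fix1 by simp
  finally show "act \<tau> (act ?s y) = act ?s y" .
qed

lemma supp_sw_sub:
  assumes N: "nominal_set act"
  shows "supp act (act (sw b c) y) \<subseteq> sw b c ` supp act y"
proof
  fix x assume x: "x \<in> supp act (act (sw b c) y)"
  have "sw b c x \<in> supp act y" unfolding supp_def
  proof
    fix A assume "A \<in> {A. finite A \<and> supports act A y}"
    hence "finite (sw b c ` A)" "supports act (sw b c ` A) (act (sw b c) y)"
      using supports_sw[OF N] by auto
    hence "x \<in> sw b c ` A" using x unfolding supp_def by blast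
    then obtain a where "a \<in> A" "x = sw b c a" by blast
    thus "sw b c x \<in> A" by simp
  qed
  thus "x \<in> sw b c ` supp act y" using image_eqI[of x "sw b c" "sw b c x"] by simp
qed

lemma supp_sw:
  assumes N: "nominal_set act"
  shows "supp act (act (sw b c) y) = sw b c ` supp act y"
proof
  show "supp act (act (sw b c) y) \<subseteq> sw b c ` supp act y" using supp_sw_sub[OF N] .
  have comp: "act (sw b c) (act (sw b c) y) = y"
  proof -
    have "act (sw b c \<circ> sw b c) y = act (sw b c) (act (sw b c) y)"
      using N fperm_sw unfolding nominal_set_def by blast
    moreover have "act id y = y" using N unfolding nominal_set_def by blast
    ultimately show ?thesis by (simp add: sw_sw)
  qed
  have "supp act y \<subseteq> sw b c ` supp act (act (sw b c) y)"
    using supp_sw_sub[OF N, of b c "act (sw b c) y"] unfolding comp .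
  hence "sw b c ` supp act y \<subseteq> sw b c ` sw b c ` supp act (act (sw b c) y)" by blast
  also have "\<dots> = supp act (act (sw b c) y)"
    by (simp add: image_comp sw_sw)
  finally show "sw b c ` supp act y \<subseteq> supp act (act (sw b c) y)" .
qed

lemma rename:
  assumes N2: "nominal_set aY2" and N1: "nominal_set aY1" and NW: "nominal_set aW2"
    and Eq: "equivariant aY2 aY1 q" and Ek: "equivariant aY2 aW2 k"
    and D: "finite D" "D \<inter> supp aY1 w = {}" "D \<inter> supp aW2 v = {}"
  shows "safe_elem aY2 k y0 \<Longrightarrow> q y0 = w \<Longrightarrow> k y0 = v \<Longrightarrow>
    \<exists>y. safe_elem aY2 k y \<and> q y = w \<and> k y = v \<and> supp aY2 y \<inter> D = {}"
proof (induction "card (supp aY2 y0 \<inter> D)" arbitrary: y0 rule: less_induct)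
  case less
  show ?case
  proof (cases "supp aY2 y0 \<inter> D = {}")
    case True thus ?thesis using less.prems by blast
  next
    case False
    then obtain b where b: "b \<in> supp aY2 y0" "b \<in> D" by blast
    have "b \<notin> supp aY1 w" "b \<notin> supp aW2 v" using b D by auto
    then obtain Aw Av where Aw: "finite Aw" "supports aY1 Aw w" "b \<notin> Aw"
      and Av: "finite Av" "supports aW2 Av v" "b \<notin> Av"
      using not_in_supp by metis
    have "finite (Aw \<union> Av \<union> supp aY2 y0 \<union> D \<union> {b})"
      using Aw Av D supp_finite[OF N2] by blast
    then obtain c where c: "c \<notin> Aw \<union> Av \<union> supp aY2 y0 \<union> D \<union> {b}"
      using ex_new_if_finite[OF infinite_UNIV_nat] by meson
    define y1 where "y1 = aY2 (sw b c) y0"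
    have cw: "c \<notin> Aw" "c \<notin> Av" using c by auto
    have "q y1 = aY1 (sw b c) (q y0)" using Eq fperm_sw
      unfolding equivariant_def y1_def by blast
    hence qy1: "q y1 = w" using sw_fix[OF Aw(2) Aw(3) cw(1)] less.prems(2) by simp
    have "k y1 = aW2 (sw b c) (k y0)" using Ek fperm_sw
      unfolding equivariant_def y1_def by blast
    hence ky1: "k y1 = v" using sw_fix[OF Av(2) Av(3) cw(2)] less.prems(3) by simp
    have sy1: "supp aY2 y1 = sw b c ` supp aY2 y0" using supp_sw[OF N2] y1_def by simp
    have cd: "card (supp aY2 y1) = card (supp aY2 y0)"
      using sy1 card_image[OF inj_on_subset[OF sw_inj subset_UNIV]] by simp
    have safe1: "safe_elem aY2 k y1" using less.prems(1) ky1 cd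
      unfolding safe_elem_def by (simp add: less.prems(3))
    have sub: "supp aY2 y1 \<inter> D \<subseteq> (supp aY2 y0 \<inter> D) - {b}"
    proof
      fix x assume x: "x \<in> supp aY2 y1 \<inter> D"
      then obtain x0 where x0: "x0 \<in> supp aY2 y0" "x = sw b c x0" using sy1 by auto
      show "x \<in> (supp aY2 y0 \<inter> D) - {b}"
      proof (cases "x0 = b")
        case True thus ?thesis using x x0 c by (auto simp: sw_def)
      next
        case False
        hence "x0 \<noteq> c" using x0 c by auto
        hence "x = x0" using False x0 by (auto simp: sw_def)
        thus ?thesis using x x0 False by auto
      qed
    qed
    hence "supp aY2 y1 \<inter> D \<subset> supp aY2 y0 \<inter> D" using b by blast
    hence "card (supp aY2 y1 \<inter> D) < card (supp aY2 y0 \<inter> D)"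
      using D(1) by (meson finite_Int psubset_card_mono)
    thus ?thesis using less.hyps safe1 qy1 ky1 by blast
  qed
qed

theorem lemma5p40:
  fixes actX1 :: "(nat \<Rightarrow> nat) \<Rightarrow> 'x1 \<Rightarrow> 'x1" and actX2 :: "(nat \<Rightarrow> nat) \<Rightarrow> 'x2 \<Rightarrow> 'x2"
    and actY1 :: "(nat \<Rightarrow> nat) \<Rightarrow> 'y1 \<Rightarrow> 'y1" and actY2 :: "(nat \<Rightarrow> nat) \<Rightarrow> 'y2 \<Rightarrow> 'y2"
    and actW1 :: "(nat \<Rightarrow> nat) \<Rightarrow> 'w1 \<Rightarrow> 'w1" and actW2 :: "(nat \<Rightarrow> nat) \<Rightarrow> 'w2 \<Rightarrow> 'w2"
    and p :: "'x2 \<Rightarrow> 'x1" and q :: "'y2 \<Rightarrow> 'y1" and s :: "'w2 \<Rightarrow> 'w1"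
    and f :: "'x1 \<Rightarrow> 'y1" and g :: "'y1 \<Rightarrow> 'w1" and h :: "'x2 \<Rightarrow> 'y2" and k :: "'y2 \<Rightarrow> 'w2"
  assumes "nominal_set actX1" "nominal_set actX2" "nominal_set actY1" "nominal_set actY2"
    "nominal_set actW1" "nominal_set actW2"
    and "equivariant actX2 actX1 p" "equivariant actY2 actY1 q" "equivariant actW2 actW1 s"
    and "equivariant actX1 actY1 f" "equivariant actY1 actW1 g"
    and "equivariant actX2 actY2 h" "equivariant actY2 actW2 k"
    and "f \<circ> p = q \<circ> h" "g \<circ> q = s \<circ> k"
    and "safe_square actX2 actX1 actY2 actY1 p f h q"
    and "safe_square actY2 actY1 actW2 actW1 q g k s"
    and "forward_safe actX1 actY1 f g"
    and "backward_safe actX2 actY2 h k"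
  shows "safe_square actX2 actX1 actW2 actW1 p (g \<circ> f) (k \<circ> h) s"
  unfolding safe_square_def
proof (intro allI impI, elim conjE)
  fix u v
  assume u: "safe_elem actX1 (g \<circ> f) u" and uv: "(g \<circ> f) u = s v"
    and dis: "bv actX1 actW1 (g \<circ> f) u \<inter> supp actW2 v = {}"
  have sfu: "supp actY1 (f u) \<subseteq> supp actX1 u" using supp_equiv[OF assms(10)] .
  have sgfu: "supp actW1 (g (f u)) \<subseteq> supp actY1 (f u)" using supp_equiv[OF assms(11)] .
  have gsafe: "safe_elem actY1 g (f u)" using assms(18) u unfolding forward_safe_def by blast
  have dis2: "bv actY1 actW1 g (f u) \<inter> supp actW2 v = {}"
    using dis sfu unfolding bv_def by auto
  have uv': "g (f u) = s v" using uv by simp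
  obtain y0 where y0: "safe_elem actY2 k y0" "q y0 = f u" "k y0 = v"
    using assms(17)[unfolded safe_square_def, rule_format, OF conjI[OF gsafe conjI[OF uv' dis2]]]
    by blast
  let ?D = "supp actX1 u - supp actY1 (f u)"
  have d2: "?D \<inter> supp actW2 v = {}" using dis sgfu unfolding bv_def by auto
  have fin: "finite ?D" using supp_finite[OF assms(1)] by blast
  have d1: "?D \<inter> supp actY1 (f u) = {}" by blast
  obtain y where y: "safe_elem actY2 k y" "q y = f u" "k y = v"
      "supp actY2 y \<inter> ?D = {}"
    using rename[OF assms(4) assms(3) assms(6) assms(8) assms(13) fin d1 d2 y0(1) y0(2) y0(3)]
    by blast
  have fsafe: "safe_elem actX1 f u" using u unfolding safe_elem_def by simp
  have bvd: "bv actX1 actY1 f u \<inter> supp actY2 y = {}" using y(4) unfolding bv_def by blast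
  have fuq: "f u = q y" using y(2) by simp
  obtain z where z: "safe_elem actX2 h z" "p z = u" "h z = y"
    using assms(16)[unfolded safe_square_def, rule_format, OF conjI[OF fsafe conjI[OF fuq bvd]]]
    by blast
  have "safe_elem actX2 (k \<circ> h) z" using assms(19) z y(1) unfolding backward_safe_def by blast
  thus "\<exists>z. safe_elem actX2 (k \<circ> h) z \<and> p z = u \<and> (k \<circ> h) z = v" using z y by auto
qed

end
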